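(* Fix an iteration $t$, an agent $p$, and $\ell>0$. Let $w^{t+1},\lambda^t_p,z^t_p\in\mathbb{R}^{J\times K}$, $\rho^t>0$, $\eta^t>0$ be given and independent of the data. For a dataset $\mathcal{D}$ let $$z^{t+1}_p(\ell;\mathcal{D})=\operatorname{argmin}_{z\in\mathbb{R}^{J\times K}}\langle f'_p(z^t_p;\mathcal{D}),z\rangle+\tfrac{\rho^t}{2}\big\|w^{t+1}-z+\tfrac1{\rho^t}(\lambda^t_p-\tilde\xi^t_p)\big\|^2+\tfrac1{2\eta^t}\|z-z^t_p\|^2+\sum_{m=1}^M\ln(1+e^{\ell h_m(z)}),$$ where $\tilde\xi^t_p$ has i.i.d. Laplace entries with mean $0$ and scale $\bar\Delta^t_p/\bar\epsilon$ (joint density proportional to $\exp(-\bar\epsilon\|\tilde\xi^t_p\|_1/\bar\Delta^t_p)$), $\bar\epsilon>0$, $\bar\Delta^t_p=\max_{\mathcal{D}'_p\in\widehat{\mathcal{D}}_p}\|f'_p(z^t_p;\mathcal{D}_p)-f'_p(z^t_p;\mathcal{D}'_p)\|_1$, the same noise distribution being used for $\mathcal{D}_p$ and its neighbours. Then for all measurable $\mathcal{S}\subset\mathbb{R}^{J\times K}$ and all $\mathcal{D}'_p\in\widehat{\mathcal{D}}_p$, $$e^{-\bar\epsilon}\,\mathbb{P}(z^{t+1}_p(\ell;\mathcal{D}'_p)\in\mathcal{S})\le\mathbb{P}(z^{t+1}_p(\ell;\mathcal{D}_p)\in\mathcal{S})\le e^{\bar\epsilon}\,\mathbb{P}(z^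{t+1}_p(\ell;\mathcal{D}'_p)\in\mathcal{S}).$$
   Context: $\mathbb{R}^{J\times K}$ carries the Frobenius inner product and norm; $\|\cdot\|_1$ is the entrywise $\ell_1$-norm. Agent $p$ holds $\mathcal{D}_p=\{(x_{pi},y_{pi})\}_{i=1}^{I_p}$; for a dataset $\mathcal{D}$ of this form, $f_p(z;\mathcal{D})=\frac1I\sum_{(x,y)\in\mathcal{D}}\varphi(z;x,y)+\frac\beta Pr(z)$ with convex loss $\varphi$, convex regularizer $r$, $\beta>0$, $I>0$ fixed; $f'_p(z;\mathcal{D})$ is a fixed subgradient at $z$. $\widehat{\mathcal{D}}_p$ is the collection of datasets differing from $\mathcal{D}_p$ in a single entry. $h_1,\dots,h_M$ are convex, twice continuously differentiable functions on $\mathbb{R}^{J\times K}$ (describing a compact convex set $\mathcal{W}=\{z:h_m(z)\le0\ \forall m\}$). The objective is strongly convex, so the minimizer is unique. *)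

theory Defs
  imports "HOL-Analysis.Analysis" "HOL-Probability.Probability"
begin

text \<open>Matrices in R^{J x K} are modelled as real ^ 'k ^ 'j; the inner product and norm
of this Euclidean space are the Frobenius inner product and norm.\<close>

type_synonym ('j, 'k) mat = "real ^ 'k ^ 'j"

definition l1norm :: "real ^ 'k ^ 'j \<Rightarrow> real" where
  "l1norm A = (\<Sum>i\<in>UNIV. \<Sum>k\<in>UNIV. \<bar>A $ i $ k\<bar>)"

definition f_loc :: "('m \<Rightarrow> 'x \<Rightarrow> 'y \<Rightarrow> real) \<Rightarrow> ('m \<Rightarrow> real) \<Rightarrow> real \<Rightarrow> real \<Rightarrow> real
     \<Rightarrow> 'm \<Rightarrow> ('x \<times> 'y) list \<Rightarrow> real" where
  "f_loc \<phi> r I \<beta> P z D = (1 / I) * (\<Sum>(x, y)\<leftarrow>D. \<phi> z x y) + (\<beta> / P) * r z"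

definition neighbours :: "'a list \<Rightarrow> 'a list set" where
  "neighbours D = {D'. \<exists>i < length D. \<exists>d. d \<noteq> D ! i \<and> D' = D[i := d]}"

definition sensitivity :: "(('x \<times> 'y) list \<Rightarrow> real ^ 'k ^ 'j) \<Rightarrow> ('x \<times> 'y) list \<Rightarrow> real" where
  "sensitivity g D = (GREATEST v. v \<in> (\<lambda>D'. l1norm (g D - g D')) ` neighbours D)"

definition twice_cont_diff :: "('a::euclidean_space \<Rightarrow> real) \<Rightarrow> bool" where
  "twice_cont_diff h \<longleftrightarrow> (\<exists>g H. (\<forall>z. (h has_derivative (\<lambda>v. g z \<bullet> v)) (at z)) \<and>
      (\<forall>z. (g has_derivative H z) (at z)) \<and> (\<forall>v. continuous_on UNIV (\<lambda>z. H z v)))"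

text \<open>Matrix with i.i.d. Laplace(0, b) entries: density proportional to exp(-||xi||_1 / b)
w.r.t. Lebesgue measure, normalised.\<close>
definition laplace_mat :: "real \<Rightarrow> (real ^ 'k ^ 'j) measure" where
  "laplace_mat b = density lborel
     (\<lambda>\<xi>. ennreal ((1 / (2 * b)) ^ (CARD('j) * CARD('k)) * exp (- l1norm \<xi> / b)))"

definition upd_obj :: "real ^ 'k ^ 'j \<Rightarrow> real ^ 'k ^ 'j \<Rightarrow> real ^ 'k ^ 'j \<Rightarrow> real \<Rightarrow> real
     \<Rightarrow> nat \<Rightarrow> (nat \<Rightarrow> real ^ 'k ^ 'j \<Rightarrow> real) \<Rightarrow> real
     \<Rightarrow> real ^ 'k ^ 'j \<Rightarrow> real ^ 'k ^ 'j \<Rightarrow> real ^ 'k ^ 'j \<Rightarrow> real" where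
  "upd_obj w lam zt \<rho> \<eta> M h ell grad \<xi> z =
     grad \<bullet> z + \<rho> / 2 * (norm (w - z + (1 / \<rho>) *\<^sub>R (lam - \<xi>)))\<^sup>2
     + 1 / (2 * \<eta>) * (norm (z - zt))\<^sup>2
     + (\<Sum>m<M. ln (1 + exp (ell * h m z)))"

definition z_next :: "real ^ 'k ^ 'j \<Rightarrow> real ^ 'k ^ 'j \<Rightarrow> real ^ 'k ^ 'j \<Rightarrow> real \<Rightarrow> real
     \<Rightarrow> nat \<Rightarrow> (nat \<Rightarrow> real ^ 'k ^ 'j \<Rightarrow> real) \<Rightarrow> real
     \<Rightarrow> real ^ 'k ^ 'j \<Rightarrow> real ^ 'k ^ 'j \<Rightarrow> real ^ 'k ^ 'j" where
  "z_next w lam zt \<rho> \<eta> M h ell grad \<xi> =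
     (THE z. \<forall>u. upd_obj w lam zt \<rho> \<eta> M h ell grad \<xi> z \<le> upd_obj w lam zt \<rho> \<eta> M h ell grad \<xi> u)"

end

theory Submission
  imports Defs
begin


lemma transl:
  fixes G :: "'a::euclidean_space \<Rightarrow> ennreal"
  assumes [measurable]: "G \<in> borel_measurable borel"
  shows "(\<integral>\<^sup>+\<xi>. G (c + \<xi>) \<partial>lborel) = (\<integral>\<^sup>+v. G v \<partial>lborel)"
proof -
  have "(\<integral>\<^sup>+v. G v \<partial>lborel) = (\<integral>\<^sup>+v. G v \<partial>distr lborel borel ((+) c))"
    by (simp add: lborel_distr_plus)
  also have "\<dots> = (\<integral>\<^sup>+\<xi>. G (c + \<xi>) \<partial>lborel)"
    by (subst nn_integral_distr) auto
  finally show ?thesis by simp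
qed

lemma l1norm_cont: "continuous_on UNIV (l1norm :: real^'k^'j \<Rightarrow> real)"
  unfolding l1norm_def by (intro continuous_intros)

lemma l1norm_tri: "l1norm (a + b :: real^'k^'j) \<le> l1norm a + l1norm b"
  unfolding l1norm_def sum.distrib[symmetric]
  by (intro sum_mono) (simp add: abs_triangle_ineq)

lemma l1norm_sym: "l1norm (a - b :: real^'k^'j) = l1norm (b - a)"
  unfolding l1norm_def by (simp add: abs_minus_commute)

lemma obj_shift:
  assumes "\<rho> > 0"
  shows "upd_obj w lam zt \<rho> \<eta> M h ell g \<xi> z = upd_obj w lam zt \<rho> \<eta> M h ell 0 (g + \<xi>) z
     + ((w + (1/\<rho>) *\<^sub>R lam) \<bullet> g + ((norm \<xi>)\<^sup>2 - (norm (g + \<xi>))\<^sup>2) / (2 * \<rho>))"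
  using assms unfolding upd_obj_def power2_norm_eq_inner
  by (simp add: inner_diff_left inner_diff_right inner_add_left inner_add_right algebra_simps
        inner_commute add_divide_distrib diff_divide_distrib)

lemma znext_shift:
  assumes "\<rho> > 0"
  shows "z_next w lam zt \<rho> \<eta> M h ell g \<xi> = z_next w lam zt \<rho> \<eta> M h ell 0 (g + \<xi>)"
  unfolding z_next_def obj_shift[OF assms, of w lam zt _ M h ell g \<xi>] by simp



lemma lap_emeasure:
  fixes g :: "real^'k^'j"
  assumes A[measurable]: "A \<in> sets borel"
  shows "emeasure (laplace_mat b) {\<xi>. g + \<xi> \<in> A} =
    (\<integral>\<^sup>+v. ennreal ((1 / (2 * b)) ^ (CARD('j) * CARD('k)) * exp (- l1norm (v - g) / b)) * indicator A v \<partial>lborel)"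
proof -
  have lm[measurable]: "l1norm \<in> borel_measurable (borel :: (real^'k^'j) measure)"
    using l1norm_cont by (rule borel_measurable_continuous_onI)
  have X: "{\<xi>. g + \<xi> \<in> A} \<in> sets (lborel :: (real^'k^'j) measure)"
  proof -
    have "{\<xi>. g + \<xi> \<in> A} = (\<lambda>\<xi>. g + \<xi>) -` A \<inter> space lborel" by auto
    also have "\<dots> \<in> sets lborel" by (intro measurable_sets[OF _ A]) simp
    finally show ?thesis .
  qed
  have "emeasure (laplace_mat b) {\<xi>. g + \<xi> \<in> A} =
     (\<integral>\<^sup>+\<xi>. ennreal ((1 / (2 * b)) ^ (CARD('j) * CARD('k)) * exp (- l1norm ((g + \<xi>) - g) / b)) * indicator A (g + \<xi>) \<partial>lborel)"
    unfolding laplace_mat_def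
    by (subst emeasure_density[OF _ X]) (auto intro!: nn_integral_cong split: split_indicator)
  also have "\<dots> = (\<integral>\<^sup>+v. ennreal ((1 / (2 * b)) ^ (CARD('j) * CARD('k)) * exp (- l1norm (v - g) / b)) * indicator A v \<partial>lborel)"
    by (rule transl) measurable
  finally show ?thesis .
qed

lemma core:
  fixes g1 g2 :: "real^'k^'j"
  assumes A[measurable]: "A \<in> sets borel" and b: "b > 0" and d: "l1norm (g1 - g2) \<le> \<epsilon> * b"
  shows "emeasure (laplace_mat b) {\<xi>. g1 + \<xi> \<in> A} \<le> ennreal (exp \<epsilon>) * emeasure (laplace_mat b) {\<xi>. g2 + \<xi> \<in> A}"
proof -
  let ?c = "(1 / (2 * b)) ^ (CARD('j) * CARD('k))"
  have lm[measurable]: "l1norm \<in> borel_measurable (borel :: (real^'k^'j) measure)"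
    using l1norm_cont by (rule borel_measurable_continuous_onI)
  have pt: "ennreal (?c * exp (- l1norm (v - g1) / b)) * indicator A v
      \<le> ennreal (exp \<epsilon>) * (ennreal (?c * exp (- l1norm (v - g2) / b)) * indicator A v)" for v
  proof -
    have "l1norm (v - g2) \<le> l1norm (v - g1) + l1norm (g1 - g2)"
      using l1norm_tri[of "v - g1" "g1 - g2"] by simp
    then have "l1norm (v - g2) - l1norm (v - g1) \<le> \<epsilon> * b" using d by linarith
    then have "(l1norm (v - g2) - l1norm (v - g1)) / b \<le> \<epsilon>" using b by (simp add: divide_le_eq)
    then have "- l1norm (v - g1) / b \<le> \<epsilon> + - l1norm (v - g2) / b"
      by (simp add: diff_divide_distrib)
    then have "exp (- l1norm (v - g1) / b) \<le> exp \<epsilon> * exp (- l1norm (v - g2) / b)"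
      by (simp add: exp_add[symmetric])
    then have "?c * exp (- l1norm (v - g1) / b) \<le> exp \<epsilon> * (?c * exp (- l1norm (v - g2) / b))"
      using b by (simp add: mult_left_mono mult.left_commute)
    then show ?thesis
      by (auto split: split_indicator simp: ennreal_mult'[symmetric] intro!: ennreal_leI)
  qed
  show ?thesis
    unfolding lap_emeasure[OF A]
    by (subst nn_integral_cmult[symmetric]) (measurable, intro nn_integral_mono pt)
qed



lemma enn_fin:
  assumes "E1 \<le> ennreal e * E2" "E2 \<le> ennreal e * E1" "e \<ge> 0"
  shows "enn2real E1 \<le> e * enn2real E2"
proof (cases "E2 = \<top>")
  case True
  then have "E1 = \<top>" using assms(2) by (auto simp: ennreal_mult_eq_top_iff top_unique)
  then show ?thesis using True by simp
next
  case False
  have "enn2real E1 \<le> enn2real (ennreal e * E2)"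
    using assms(1) False by (intro enn2real_mono) (auto simp: ennreal_mult_less_top top.not_eq_extremum)
  also have "\<dots> = e * enn2real E2" using assms(3) by (simp add: enn2real_mult)
  finally show ?thesis .
qed

lemma sens_ge:
  assumes "\<exists>D'\<in>neighbours Dp. \<forall>D''\<in>neighbours Dp.
            l1norm (g Dp - g D'') \<le> l1norm (g Dp - g D')"
    and "Dp' \<in> neighbours Dp"
  shows "l1norm (g Dp - g Dp') \<le> sensitivity g Dp"
proof -
  obtain D' where D': "D' \<in> neighbours Dp" "\<forall>D''\<in>neighbours Dp. l1norm (g Dp - g D'') \<le> l1norm (g Dp - g D')"
    using assms(1) by blast
  have "sensitivity g Dp = l1norm (g Dp - g D')"
    unfolding sensitivity_def using D' by (intro Greatest_equality) auto
  then show ?thesis using D' assms(2) by auto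
qed


theorem proposition2:
  fixes \<phi> :: "real ^ 'k ^ 'j \<Rightarrow> 'x \<Rightarrow> 'y \<Rightarrow> real"
    and r :: "real ^ 'k ^ 'j \<Rightarrow> real"
    and I \<beta> P :: real
    and fp' :: "real ^ 'k ^ 'j \<Rightarrow> ('x \<times> 'y) list \<Rightarrow> real ^ 'k ^ 'j"
    and h :: "nat \<Rightarrow> real ^ 'k ^ 'j \<Rightarrow> real" and M :: nat
    and Dp :: "('x \<times> 'y) list"
    and w lam zt :: "real ^ 'k ^ 'j"
    and \<rho> \<eta> \<epsilon> ell :: real
  assumes conv_phi: "\<And>x y. convex_on UNIV (\<lambda>z. \<phi> z x y)"
    and conv_r: "convex_on UNIV r"
    and I_pos: "I > 0" and beta_pos: "\<beta> > 0" and P_pos: "P > 0"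
    and subgrad: "\<And>z D u. f_loc \<phi> r I \<beta> P u D \<ge> f_loc \<phi> r I \<beta> P z D + fp' z D \<bullet> (u - z)"
    and conv_h: "\<And>m. m < M \<Longrightarrow> convex_on UNIV (h m)"
    and smooth_h: "\<And>m. m < M \<Longrightarrow> twice_cont_diff (h m)"
    and W_compact: "compact {z. \<forall>m<M. h m z \<le> 0}"
    and ell_pos: "ell > 0" and rho_pos: "\<rho> > 0" and eta_pos: "\<eta> > 0" and eps_pos: "\<epsilon> > 0"
    and max_attained: "\<exists>D'\<in>neighbours Dp. \<forall>D''\<in>neighbours Dp.
            l1norm (fp' zt Dp - fp' zt D'') \<le> l1norm (fp' zt Dp - fp' zt D')"
    and sens_pos: "sensitivity (fp' zt) Dp > 0"
    and S_meas: "S \<in> sets borel"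
    and nb: "Dp' \<in> neighbours Dp"
  shows "exp (- \<epsilon>) * measure (laplace_mat (sensitivity (fp' zt) Dp / \<epsilon>))
            {\<xi>. z_next w lam zt \<rho> \<eta> M h ell (fp' zt Dp') \<xi> \<in> S}
         \<le> measure (laplace_mat (sensitivity (fp' zt) Dp / \<epsilon>))
            {\<xi>. z_next w lam zt \<rho> \<eta> M h ell (fp' zt Dp) \<xi> \<in> S}
       \<and> measure (laplace_mat (sensitivity (fp' zt) Dp / \<epsilon>))
            {\<xi>. z_next w lam zt \<rho> \<eta> M h ell (fp' zt Dp) \<xi> \<in> S}
         \<le> exp \<epsilon> * measure (laplace_mat (sensitivity (fp' zt) Dp / \<epsilon>))
            {\<xi>. z_next w lam zt \<rho> \<eta> M h ell (fp' zt Dp') \<xi> \<in> S}"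
proof -
  let ?g1 = "fp' zt Dp" and ?g2 = "fp' zt Dp'"
  let ?b = "sensitivity (fp' zt) Dp / \<epsilon>"
  let ?L = "laplace_mat ?b :: (real^'k^'j) measure"
  let ?A = "{v. z_next w lam zt \<rho> \<eta> M h ell 0 v \<in> S}"
  have b: "?b > 0" using sens_pos eps_pos by simp
  have d1: "l1norm (?g1 - ?g2) \<le> \<epsilon> * ?b"
    using sens_ge[OF max_attained nb] eps_pos by simp
  have d2: "l1norm (?g2 - ?g1) \<le> \<epsilon> * ?b"
    using d1 l1norm_sym[of ?g2 ?g1] by simp
  have set_eq: "{\<xi>. z_next w lam zt \<rho> \<eta> M h ell g \<xi> \<in> S} = {\<xi>. g + \<xi> \<in> ?A}" for g
  proof -
    have "z_next w lam zt \<rho> \<eta> M h ell g \<xi> = z_next w lam zt \<rho> \<eta> M h ell 0 (g + \<xi>)" for \<xi>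
      by (rule znext_shift[OF rho_pos])
    then show ?thesis by (intro Collect_cong) (simp only: mem_Collect_eq)
  qed
  have e0: "exp \<epsilon> \<ge> 0" by simp
  show ?thesis
  proof (cases "?A \<in> sets borel")
    case True
    have E1: "emeasure ?L {\<xi>. ?g1 + \<xi> \<in> ?A} \<le> ennreal (exp \<epsilon>) * emeasure ?L {\<xi>. ?g2 + \<xi> \<in> ?A}"
      by (rule core[OF True b d1])
    have E2: "emeasure ?L {\<xi>. ?g2 + \<xi> \<in> ?A} \<le> ennreal (exp \<epsilon>) * emeasure ?L {\<xi>. ?g1 + \<xi> \<in> ?A}"
      by (rule core[OF True b d2])
    have m1: "measure ?L {\<xi>. ?g1 + \<xi> \<in> ?A} \<le> exp \<epsilon> * measure ?L {\<xi>. ?g2 + \<xi> \<in> ?A}"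
      unfolding measure_def by (rule enn_fin[OF E1 E2 e0])
    have m2: "measure ?L {\<xi>. ?g2 + \<xi> \<in> ?A} \<le> exp \<epsilon> * measure ?L {\<xi>. ?g1 + \<xi> \<in> ?A}"
      unfolding measure_def by (rule enn_fin[OF E2 E1 e0])
    have m2': "exp (- \<epsilon>) * measure ?L {\<xi>. ?g2 + \<xi> \<in> ?A} \<le> measure ?L {\<xi>. ?g1 + \<xi> \<in> ?A}"
    proof -
      have "exp (- \<epsilon>) * measure ?L {\<xi>. ?g2 + \<xi> \<in> ?A} \<le> exp (- \<epsilon>) * (exp \<epsilon> * measure ?L {\<xi>. ?g1 + \<xi> \<in> ?A})"
        using m2 by (intro mult_left_mono) auto
      also have "\<dots> = measure ?L {\<xi>. ?g1 + \<xi> \<in> ?A}"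
        by (simp add: mult.assoc[symmetric] exp_add[symmetric])
      finally show ?thesis .
    qed
    show ?thesis unfolding set_eq[of ?g1] set_eq[of ?g2] using m1 m2' by simp
  next
    case False
    have nm: "{\<xi>. g + \<xi> \<in> ?A} \<notin> sets ?L" for g :: "real^'k^'j"
    proof
      assume X: "{\<xi>. g + \<xi> \<in> ?A} \<in> sets ?L"
      then have X': "{\<xi>. g + \<xi> \<in> ?A} \<in> sets borel" by (simp add: laplace_mat_def)
      have "?A = (\<lambda>v. v - g) -` {\<xi>. g + \<xi> \<in> ?A} \<inter> space borel" by auto
      also have "\<dots> \<in> sets borel" by (intro measurable_sets[OF _ X']) simp
      finally show False using False by simp
    qed
    show ?thesis unfolding set_eq[of ?g1] set_eq[of ?g2] using nm[of ?g1] nm[of ?g2]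
      by (simp add: measure_notin_sets)
  qed
qed

end
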